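(* Let $m\mid n$, $s=n/m$, $\alpha$ a primitive element of $\mathbb{F}_{q^n}$, $l$ an integer with $1\le l<\frac{q^n-1}{q^m-1}$, $L$ the degree of the minimal polynomial of $\alpha^l$ over $\mathbb{F}_{q^m}$, and $\mathcal{F}=(\mathcal{F}_1,\dots,\mathcal{F}_r)$, $r\ge2$, the flag of type $(ms_1,\dots,ms_r)$ with $1\le s_1<\dots<s_r\le L$, $s_r<s$, and $\mathcal{F}_i=\bigoplus_{j=0}^{s_i-1}\mathbb{F}_{q^m}\alpha^{lj}$. Then: (1) $d_f(\mathrm{Orb}(\mathcal{F}))=2m$ if and only if the type of $\mathcal{F}$ is $(ms_1,mL)$ (so $r=2$, $s_2=L$) for some $1\le s_1<L<s$. Moreover, if in this case $s_1=1$, then $\mathcal{F}=(\mathbb{F}_{q^m},\mathbb{F}_{q^{mL}})$ is the Galois flag of type $(m,mL)$. (2) $\mathrm{Orb}(\mathcal{F})$ is an optimum distance flag code if and only if $L=s$ and the type of $\mathcal{F}$ is $(m,m(L-1))$. In this case $\mathrm{Orb}(\mathcal{F})$ is a generalized Galois flag code with the largest possible size $\frac{q^n-1}{q^m-1}$.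
   Context: $q$ prime power; subspaces are $\mathbb{F}_q$-subspaces of $\mathbb{F}_{q^n}$; a flag is a chain $\{0\}\subsetneq\mathcal{F}_1\subsetneq\cdots\subsetneq\mathcal{F}_r\subsetneq\mathbb{F}_{q^n}$ with type its vector of dimensions. $d_S(\mathcal{U},\mathcal{V})=\dim(\mathcal{U}+\mathcal{V})-\dim(\mathcal{U}\cap\mathcal{V})$, $d_f(\mathcal{F},\mathcal{F}')=\sum_i d_S(\mathcal{F}_i,\mathcal{F}'_i)$, $\mathrm{Orb}(\mathcal{F})=\{\mathcal{F}\alpha^j:j\ge0\}$ where $\mathcal{F}\alpha^j=(\mathcal{F}_1\alpha^j,\dots,\mathcal{F}_r\alpha^j)$; the minimum distance of a code is the minimum $d_f$ between distinct codewords. A flag code of type $(t_1,\dots,t_r)$ is an optimum distance flag code if its minimum distance equals $2(\sum_{t_i\le\lfloor n/2\rfloor}t_i+\sum_{t_i>\lfloor n/2\rfloor}(n-t_i))$. The Galois flag of type $(t_1,\dots,t_r)$ (with $t_i\mid t_{i+1}$, $t_i\mid n$) is $(\mathbb{F}_{q^{t_1}},\dots,\mathbb{F}_{q^{t_r}})$. A generalized Galois flag is a flag having at least one subspace that is a subfield of $\mathbb{F}_{q^n}$ and at least one that is not; a generalized Galois flag code is its orbit. *)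

theory Defs
  imports "HOL-Computational_Algebra.Polynomial" "HOL-Computational_Algebra.Primes"
begin

text \<open>Ambient field F_{q^n} is a finite field type 'a with CARD('a) = q^n.\<close>

definition prime_power :: "nat \<Rightarrow> bool" where
  "prime_power q \<longleftrightarrow> (\<exists>p k. prime p \<and> k > 0 \<and> q = p ^ k)"

definition subfield_of_order :: "nat \<Rightarrow> nat \<Rightarrow> 'a::{finite,field} set" where
  "subfield_of_order q k = {x. x ^ (q ^ k) = x}"

definition dimq :: "nat \<Rightarrow> 'a::{finite,field} set \<Rightarrow> nat" where
  "dimq q U = (THE d. card U = q ^ d)"

definition subspace_sum :: "'a::{finite,field} set \<Rightarrow> 'a set \<Rightarrow> 'a set" where
  "subspace_sum U V = {u + v | u v. u \<in> U \<and> v \<in> V}"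

definition subspace_dist :: "nat \<Rightarrow> 'a::{finite,field} set \<Rightarrow> 'a set \<Rightarrow> nat" where
  "subspace_dist q U V = dimq q (subspace_sum U V) - dimq q (U \<inter> V)"

definition flag_dist :: "nat \<Rightarrow> 'a::{finite,field} set list \<Rightarrow> 'a set list \<Rightarrow> nat" where
  "flag_dist q F G = (\<Sum>i<length F. subspace_dist q (F ! i) (G ! i))"

definition flag_type :: "nat \<Rightarrow> 'a::{finite,field} set list \<Rightarrow> nat list" where
  "flag_type q F = map (dimq q) F"

definition orbit_flag :: "'a::{finite,field} \<Rightarrow> 'a set list \<Rightarrow> 'a set list set" where
  "orbit_flag \<alpha> F = {map (\<lambda>U. (\<lambda>x. x * \<alpha> ^ j) ` U) F | j. True}"

definition code_min_dist :: "nat \<Rightarrow> 'a::{finite,field} set list set \<Rightarrow> nat" where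
  "code_min_dist q C = Min {flag_dist q F G | F G. F \<in> C \<and> G \<in> C \<and> F \<noteq> G}"

definition optimum_distance_flag_code ::
  "nat \<Rightarrow> nat \<Rightarrow> nat list \<Rightarrow> 'a::{finite,field} set list set \<Rightarrow> bool" where
  "optimum_distance_flag_code q n typ C \<longleftrightarrow>
     code_min_dist q C = 2 * (\<Sum>t\<leftarrow>typ. if t \<le> n div 2 then t else n - t)"

definition primitive_element :: "'a::{finite,field} \<Rightarrow> bool" where
  "primitive_element \<alpha> \<longleftrightarrow> (\<forall>x. x \<noteq> 0 \<longrightarrow> (\<exists>j. x = \<alpha> ^ j))"

definition minpoly_degree :: "'a::{finite,field} set \<Rightarrow> 'a \<Rightarrow> nat" where
  "minpoly_degree K b = (LEAST d. \<exists>p. p \<noteq> 0 \<and> degree p = d \<and> (\<forall>i. coeff p i \<in> K) \<and> poly p b = 0)"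

definition is_subfield :: "'a::{finite,field} set \<Rightarrow> bool" where
  "is_subfield S \<longleftrightarrow> 0 \<in> S \<and> 1 \<in> S \<and> (\<forall>x\<in>S. \<forall>y\<in>S. x + y \<in> S \<and> x * y \<in> S)
      \<and> (\<forall>x\<in>S. - x \<in> S) \<and> (\<forall>x\<in>S. x \<noteq> 0 \<longrightarrow> inverse x \<in> S)"

definition generalized_Galois_flag :: "'a::{finite,field} set list \<Rightarrow> bool" where
  "generalized_Galois_flag F \<longleftrightarrow> (\<exists>U\<in>set F. is_subfield U) \<and> (\<exists>U\<in>set F. \<not> is_subfield U)"

text \<open>F_i = direct sum over j < s_i of F_{q^m} alpha^(l j).\<close>
definition power_span :: "'a::{finite,field} set \<Rightarrow> 'a \<Rightarrow> nat \<Rightarrow> 'a set" where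
  "power_span K b k = {\<Sum>j<k. c j * b ^ j | c. \<forall>j<k. c j \<in> K}"

end

theory Submission
  imports Defs
begin

lemma prime_char_fin: "prime CHAR('a::{finite,field})"
  by (rule prime_CHAR_semidom) (rule finite_imp_CHAR_pos, simp)

lemma of_nat_card_zero: "of_nat (card (UNIV::'a::{finite,field} set)) = (0::'a)"
proof -
  have "(\<Sum>y\<in>UNIV. y + 1) = (\<Sum>y\<in>(UNIV::'a set). y)"
    by (rule sum.reindex_bij_witness[of _ "\<lambda>y. y - 1" "\<lambda>y. y + 1"]) auto
  then show ?thesis by (simp add: sum.distrib)
qed

lemma prod_pow_one:
  fixes x :: "'a::field"
  assumes T: "finite T" "0 \<notin> T" "\<forall>a\<in>T. \<forall>b\<in>T. a*b \<in> T" and x: "x \<in> T"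
  shows "x ^ card T = 1"
proof -
  have x0: "x \<noteq> 0" using x T by auto
  have inj: "inj_on (\<lambda>y. x*y) T" using x0 by (auto simp: inj_on_def)
  have sub: "(\<lambda>y. x*y) ` T \<subseteq> T" using T x by auto
  have eq: "(\<lambda>y. x*y) ` T = T"
    using card_image[OF inj] sub T by (metis card_subset_eq finite_imageI)
  have "prod (\<lambda>y. y) T = prod (\<lambda>y. y) ((\<lambda>y. x*y) ` T)" using eq by simp
  also have "\<dots> = prod (\<lambda>y. x*y) T" by (simp add: prod.reindex[OF inj])
  also have "\<dots> = x ^ card T * prod (\<lambda>y. y) T" by (simp add: prod.distrib)
  finally have "prod (\<lambda>y. y) T * 1 = prod (\<lambda>y. y) T * x ^ card T" by (simp add: mult.commute)
  moreover have "prod (\<lambda>y. y) T \<noteq> 0" using T by auto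
  ultimately show ?thesis by (metis mult_left_cancel)
qed

lemma pow_card_same: "(x::'a::{finite,field}) ^ card (UNIV::'a set) = x"
proof (cases "x = 0")
  case True
  have "card (UNIV::'a set) > 0" using finite_UNIV_card_ge_0[where 'a='a] by simp
  then show ?thesis using True by simp
next
  case False
  have c: "card (UNIV - {0::'a}) = card (UNIV::'a set) - 1" by (simp add: card_Diff_singleton)
  have "x ^ card (UNIV - {0::'a}) = 1"
    by (rule prod_pow_one) (use False in auto)
  then have "x * x ^ (card (UNIV::'a set) - 1) = x" using c by simp
  moreover have "card (UNIV::'a set) = Suc (card (UNIV::'a set) - 1)"
    using finite_UNIV_card_ge_0[where 'a='a] by simp
  ultimately show ?thesis by (metis power_Suc)
qed

lemma dvd_pow_minus1: "(a - 1) dvd (a ^ s - (1::nat))"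
proof (cases "a = 0")
  case True then show ?thesis by (cases s) auto
next
  case False
  show ?thesis
  proof (induction s)
    case 0 then show ?case by simp
  next
    case (Suc s)
    have "a ^ Suc s - 1 = a * (a ^ s - 1) + (a - 1)"
      using False by (simp add: algebra_simps diff_mult_distrib2)
    then show ?case using Suc by simp
  qed
qed


context
  fixes q n m :: nat
  assumes q: "prime_power q" and card: "card (UNIV :: 'a::{finite,field} set) = q ^ n"
      and mn: "m dvd n"
begin

lemma card_ge2: "card (UNIV :: 'a set) \<ge> 2"
proof -
  have "{0::'a, 1} \<subseteq> UNIV" by simp
  then have "card {0::'a,1} \<le> card (UNIV::'a set)" by (rule card_mono[OF finite_UNIV])
  then show ?thesis by simp
qed

lemma q2: "q \<ge> 2"
proof -
  obtain p k where pk: "prime p" "k > 0" "q = p ^ k" using q unfolding prime_power_def by blast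
  have "p \<ge> 2" using pk(1) prime_ge_2_nat by blast
  moreover have "p \<le> p ^ k" using pk(2) \<open>p \<ge> 2\<close> by (simp add: self_le_power)
  ultimately show ?thesis using pk(3) by linarith
qed

lemma n_pos: "n > 0"
  using card_ge2 card by (cases n) auto

lemma m_pos: "m > 0"
  using mn n_pos by (cases m) auto

lemma frob: "(x + y :: 'a) ^ (q ^ m) = x ^ (q ^ m) + y ^ (q ^ m)"
proof -
  obtain p k where pk: "prime p" "k > 0" "q = p ^ k" using q unfolding prime_power_def by blast
  have "of_nat (p ^ (k*n)) = (0::'a)" using of_nat_card_zero[where 'a='a] card pk by (simp add: power_mult)
  then have "CHAR('a) dvd p ^ (k*n)" by (rule of_nat_eq_0_iff_char_dvd[THEN iffD1])
  then have "CHAR('a) dvd p" using prime_dvd_power prime_char_fin by blast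
  then have "CHAR('a) = p" using primes_dvd_imp_eq prime_char_fin pk(1) by blast
  then have "q ^ m = CHAR('a) ^ (k * m)" using pk by (simp add: power_mult)
  then show ?thesis using freshmans_dream'[OF prime_char_fin] by blast
qed

abbreviation "KK \<equiv> (subfield_of_order q m :: 'a set)"

lemma Q2: "q ^ m \<ge> 2"
proof -
  have "q \<le> q ^ m" using q2 m_pos by (simp add: self_le_power)
  then show ?thesis using q2 by linarith
qed

lemma K0: "0 \<in> KK" using Q2 q2 by (simp add: subfield_of_order_def)
lemma K1: "1 \<in> KK" by (simp add: subfield_of_order_def)
lemma Kadd: "x \<in> KK \<Longrightarrow> y \<in> KK \<Longrightarrow> x + y \<in> KK" by (simp add: subfield_of_order_def frob)
lemma Kmul: "x \<in> KK \<Longrightarrow> y \<in> KK \<Longrightarrow> x * y \<in> KK" by (simp add: subfield_of_order_def power_mult_distrib)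
lemma Kinv: "x \<in> KK \<Longrightarrow> inverse x \<in> KK" by (simp add: subfield_of_order_def power_inverse)
lemma Km1: "-1 \<in> KK"
proof -
  have "(1 + (-1::'a)) ^ (q^m) = 0" using Q2 q2 by simp
  then have "1 + (-1::'a) ^ (q^m) = 0" by (simp only: frob) simp
  then show ?thesis by (simp add: subfield_of_order_def add_eq_0_iff)
qed
lemma Kneg: "x \<in> KK \<Longrightarrow> -x \<in> KK" using Kmul[OF Km1] by fastforce

lemma card_K_le: "card KK \<le> q ^ m"
proof -
  define P :: "'a poly" where "P = monom 1 (q^m) - monom 1 1"
  have cP: "coeff P (q^m) = 1" using Q2 by (simp add: P_def coeff_monom)
  then have P0: "P \<noteq> 0" by auto
  have dP: "degree P \<le> q ^ m" unfolding P_def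
    using Q2 by (intro degree_diff_le) (auto intro: order.trans[OF degree_monom_le])
  have "KK = {x. poly P x = 0}" by (auto simp: subfield_of_order_def P_def poly_monom)
  then show ?thesis using card_poly_roots_bound[OF P0] dP by simp
qed

end

context
  fixes q n m :: nat and \<alpha> :: "'a::{finite,field}"
  assumes q: "prime_power q" and card: "card (UNIV :: 'a set) = q ^ n"
      and mn: "m dvd n" and prim: "primitive_element \<alpha>"
      and big: "card (UNIV :: 'a set) > 2"
begin

lemma alpha_nz: "\<alpha> \<noteq> 0"
proof
  assume a: "\<alpha> = 0"
  have "UNIV \<subseteq> {0::'a, 1}"
  proof
    fix x :: 'a
    show "x \<in> {0,1}"
    proof (cases "x = 0")
      case False
      then obtain j where "x = \<alpha> ^ j" using prim unfolding primitive_element_def by blast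
      then show ?thesis using a by (cases j) auto
    qed simp
  qed
  then have "card (UNIV::'a set) \<le> card {0::'a,1}" by (rule card_mono[rotated]) simp
  also have "\<dots> \<le> 2" by (simp add: card_insert_le_m1)
  finally show False using big by simp
qed

lemma alpha_N: "\<alpha> ^ (card (UNIV::'a set) - 1) = 1"
proof -
  have "card (UNIV - {0::'a}) = card (UNIV::'a set) - 1" by (simp add: card_Diff_singleton)
  moreover have "\<alpha> ^ card (UNIV - {0::'a}) = 1"
    by (rule prod_pow_one) (use alpha_nz in auto)
  ultimately show ?thesis by simp
qed

lemma alpha_ord: assumes "\<alpha> ^ d = 1" "d > 0" shows "card (UNIV::'a set) - 1 \<le> d"
proof -
  have "UNIV - {0::'a} \<subseteq> (\<lambda>j. \<alpha> ^ j) ` {..<d}"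
  proof
    fix x assume "x \<in> UNIV - {0::'a}"
    then obtain j where j: "x = \<alpha> ^ j" using prim unfolding primitive_element_def by blast
    have "j = d * (j div d) + j mod d" by simp
    then have "\<alpha>^j = (\<alpha>^d)^(j div d) * \<alpha>^(j mod d)" by (metis power_add power_mult)
    then have "\<alpha>^j = \<alpha>^(j mod d)" using assms(1) by simp
    then show "x \<in> (\<lambda>j. \<alpha> ^ j) ` {..<d}" using j assms(2) by auto
  qed
  then have "card (UNIV - {0::'a}) \<le> card ((\<lambda>j. \<alpha> ^ j) ` {..<d})" by (rule card_mono[rotated]) simp
  also have "\<dots> \<le> d" using card_image_le[of "{..<d}" "\<lambda>j. \<alpha> ^ j"] by simp
  finally show ?thesis by (simp add: card_Diff_singleton)
qed

lemma card_K_ge: "q ^ m \<le> card (KK q m :: 'a set)"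
proof -
  define Q where "Q = q ^ m"
  define N where "N = card (UNIV::'a set) - 1"
  obtain s where s: "n = m * s" using mn by blast
  have N: "N = Q ^ s - 1" using card s by (simp add: N_def Q_def power_mult)
  have dv: "(Q - 1) dvd N" unfolding N by (rule dvd_pow_minus1)
  define M where "M = N div (Q - 1)"
  have Q2': "Q \<ge> 2" unfolding Q_def using Q2[OF q card mn] .
  have NM: "N = M * (Q - 1)" using dv by (simp add: M_def)
  have inj: "inj_on (\<lambda>k. \<alpha> ^ (M * k)) {..<Q - 1}"
  proof (rule inj_onI, rule ccontr)
    fix a b assume a: "a \<in> {..<Q-1}" and b: "b \<in> {..<Q-1}" and e: "\<alpha> ^ (M*a) = \<alpha> ^ (M*b)" and ne: "a \<noteq> b"
    have gen: "\<And>a b. a < b \<Longrightarrow> b < Q - 1 \<Longrightarrow> \<alpha> ^ (M*a) = \<alpha> ^ (M*b) \<Longrightarrow> False"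
    proof -
      fix a b assume ab: "a < b" "b < Q - 1" and e: "\<alpha> ^ (M*a) = \<alpha> ^ (M*b)"
      have "\<alpha> ^ (M*b) = \<alpha> ^ (M*a) * \<alpha> ^ (M*(b-a))"
        using ab by (simp add: power_add[symmetric] diff_mult_distrib2[symmetric] add_mult_distrib2[symmetric])
      then have "\<alpha> ^ (M*(b-a)) = 1" using e alpha_nz by simp
      moreover have M0: "M > 0" using NM big N_def by (cases M) auto
      ultimately have "N \<le> M*(b-a)" using alpha_ord ab unfolding N_def by simp
      moreover have "M*(b-a) < M*(Q-1)" using ab M0 by simp
      ultimately show False using NM by simp
    qed
    show False using ne gen[of a b] gen[of b a] a b e by (cases "a < b") auto
  qed
  have sub: "insert 0 ((\<lambda>k. \<alpha> ^ (M * k)) ` {..<Q - 1}) \<subseteq> KK q m"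
  proof -
    have "\<And>k. (\<alpha> ^ (M*k)) ^ Q = \<alpha> ^ (M*k)"
    proof -
      fix k
      have "M*k*Q = M*k + k*N" using NM Q2' by (simp add: algebra_simps diff_mult_distrib2)
      then have "(\<alpha> ^ (M*k)) ^ Q = \<alpha> ^ (M*k) * (\<alpha> ^ N) ^ k"
        by (simp add: power_mult[symmetric] power_add mult.commute)
      then show "(\<alpha> ^ (M*k)) ^ Q = \<alpha> ^ (M*k)" using alpha_N N_def by simp
    qed
    then show ?thesis using K0[OF q card mn] by (auto simp: subfield_of_order_def Q_def)
  qed
  have "card (insert 0 ((\<lambda>k. \<alpha> ^ (M * k)) ` {..<Q - 1})) = Q"
  proof -
    have "0 \<notin> (\<lambda>k. \<alpha> ^ (M * k)) ` {..<Q - 1}" using alpha_nz by auto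
    then show ?thesis using card_image[OF inj] Q2' by simp
  qed
  then show ?thesis using card_mono[OF _ sub] by (simp add: Q_def)
qed

end

definition ksub :: "'a::{finite,field} set \<Rightarrow> 'a set \<Rightarrow> bool" where
  "ksub K U \<longleftrightarrow> 0 \<in> U \<and> (\<forall>x\<in>U. \<forall>y\<in>U. x+y \<in> U) \<and> (\<forall>c\<in>K. \<forall>x\<in>U. c*x \<in> U)"

definition scl :: "'a::{finite,field} set \<Rightarrow> 'a \<Rightarrow> 'a set" where
  "scl U y = (\<lambda>x. x*y) ` U"

locale kf =
  fixes K :: "'a::{finite,field} set" and Q :: nat
  assumes K0: "0 \<in> K" and K1: "1 \<in> K" and Kadd: "\<And>x y. x \<in> K \<Longrightarrow> y \<in> K \<Longrightarrow> x + y \<in> K"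
    and Kmul: "\<And>x y. x \<in> K \<Longrightarrow> y \<in> K \<Longrightarrow> x * y \<in> K"
    and Kneg: "\<And>x. x \<in> K \<Longrightarrow> -x \<in> K" and Kinv: "\<And>x. x \<in> K \<Longrightarrow> inverse x \<in> K"
    and cardK: "card K = Q" and Q2: "Q \<ge> 2"
begin

lemma ksubD: assumes "ksub K U"
  shows "0 \<in> U" "x \<in> U \<Longrightarrow> y \<in> U \<Longrightarrow> x + y \<in> U" "c \<in> K \<Longrightarrow> x \<in> U \<Longrightarrow> c * x \<in> U"
  using assms unfolding ksub_def by auto

lemma ksub_neg: assumes "ksub K U" "x \<in> U" shows "-x \<in> U"
  using ksubD(3)[OF assms(1) Kneg[OF K1] assms(2)] by simp

lemma ksub_diff: assumes "ksub K U" "x \<in> U" "y \<in> U" shows "x - y \<in> U"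
  using ksubD(2)[OF assms(1) assms(2) ksub_neg[OF assms(1,3)]] by simp

lemma ksub_sum: assumes "ksub K U" "\<And>i. i \<in> I \<Longrightarrow> f i \<in> U" shows "sum f I \<in> U"
proof (cases "finite I")
  case True
  then show ?thesis using assms(2)
    by (induction I rule: finite_induct) (auto intro: ksubD[OF assms(1)])
qed (simp add: ksubD(1)[OF assms(1)])

lemma ksub_zero: "ksub K {0}" by (simp add: ksub_def)

lemma ksub_int: "ksub K U \<Longrightarrow> ksub K V \<Longrightarrow> ksub K (U \<inter> V)"
  by (simp add: ksub_def)

lemma ksub_sumsp: assumes "ksub K U" "ksub K V" shows "ksub K (subspace_sum U V)"
  unfolding ksub_def subspace_sum_def
proof (intro conjI ballI)
  show "0 \<in> {u + v |u v. u \<in> U \<and> v \<in> V}" using assms ksubD(1) by force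
next
  fix x y assume "x \<in> {u + v |u v. u \<in> U \<and> v \<in> V}" "y \<in> {u + v |u v. u \<in> U \<and> v \<in> V}"
  then obtain u v u' v' where "x = u + v" "y = u' + v'" "u \<in> U" "v \<in> V" "u' \<in> U" "v' \<in> V" by blast
  then show "x + y \<in> {u + v |u v. u \<in> U \<and> v \<in> V}"
    by (intro CollectI exI[of _ "u+u'"] exI[of _ "v+v'"]) (auto simp: ksubD assms algebra_simps)
next
  fix c x assume c: "c \<in> K" and "x \<in> {u + v |u v. u \<in> U \<and> v \<in> V}"
  then obtain u v where "x = u + v" "u \<in> U" "v \<in> V" by blast
  then show "c * x \<in> {u + v |u v. u \<in> U \<and> v \<in> V}"
    using c by (intro CollectI exI[of _ "c*u"] exI[of _ "c*v"]) (auto simp: ksubD assms algebra_simps)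
qed

lemma ksub_scl: assumes "ksub K U" shows "ksub K (scl U y)"
  unfolding ksub_def scl_def
proof (intro conjI ballI)
  show "0 \<in> (\<lambda>x. x * y) ` U" using ksubD(1)[OF assms] by force
next
  fix a b assume "a \<in> (\<lambda>x. x * y) ` U" "b \<in> (\<lambda>x. x * y) ` U"
  then obtain u v where "a = u*y" "b = v*y" "u \<in> U" "v \<in> U" by blast
  then show "a + b \<in> (\<lambda>x. x * y) ` U"
    using ksubD(2)[OF assms] by (auto simp: algebra_simps intro!: image_eqI[of _ _ "u+v"])
next
  fix c a assume c: "c \<in> K" and "a \<in> (\<lambda>x. x * y) ` U"
  then obtain u where "a = u*y" "u \<in> U" by blast
  then show "c * a \<in> (\<lambda>x. x * y) ` U"
    using ksubD(3)[OF assms c] by (auto intro!: image_eqI[of _ _ "c*u"])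
qed

lemma card_scl: "y \<noteq> 0 \<Longrightarrow> card (scl U y) = card U"
  unfolding scl_def by (rule card_image) (auto simp: inj_on_def)

lemma growth:
  assumes W: "ksub K W" and u: "u \<notin> W"
  shows "card {w + c*u | w c. w \<in> W \<and> c \<in> K} = card W * Q"
    and "ksub K {w + c*u | w c. w \<in> W \<and> c \<in> K}"
proof -
  have eq: "{w + c*u | w c. w \<in> W \<and> c \<in> K} = (\<lambda>(w,c). w + c*u) ` (W \<times> K)" by auto
  have inj: "inj_on (\<lambda>(w,c). w + c*u) (W \<times> K)"
  proof (rule inj_onI)
    fix x y assume xm: "x \<in> W \<times> K" "y \<in> W \<times> K" and e0: "(\<lambda>(w,c). w + c*u) x = (\<lambda>(w,c). w + c*u) y"
    obtain w1 c1 w2 c2 where xy: "x = (w1,c1)" "y = (w2,c2)" by (cases x, cases y) auto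
    have w: "w1 \<in> W" "c1 \<in> K" "w2 \<in> W" "c2 \<in> K" using xm xy by auto
    have e: "w1 + c1*u = w2 + c2*u" using e0 xy by simp
    have "c1 = c2"
    proof (rule ccontr)
      assume False: "c1 \<noteq> c2"
      have d: "(c1 - c2) * u = w2 - w1" using e by (simp add: algebra_simps)
      have d0: "c1 - c2 \<noteq> 0" using False by simp
      have uu: "u = inverse (c1 - c2) * (w2 - w1)"
        using d d0 by (simp add: field_simps)
      have "c1 - c2 \<in> K" using Kadd[OF w(2) Kneg[OF w(4)]] by simp
      then have "inverse (c1 - c2) \<in> K" by (rule Kinv)
      then have "u \<in> W" unfolding uu by (rule ksubD(3)[OF W]) (rule ksub_diff[OF W w(3) w(1)])
      then show False using u by simp
    qed
    then show "x = y" using e xy by simp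
  qed
  show "card {w + c*u | w c. w \<in> W \<and> c \<in> K} = card W * Q"
    unfolding eq card_image[OF inj] by (simp add: card_cartesian_product cardK)
  show "ksub K {w + c*u | w c. w \<in> W \<and> c \<in> K}"
    unfolding ksub_def
  proof (intro conjI ballI)
    have "0 = 0 + 0 * u" by simp
    then show "0 \<in> {w + c * u |w c. w \<in> W \<and> c \<in> K}" using ksubD(1)[OF W] K0 by blast
  next
    fix x y assume "x \<in> {w + c * u |w c. w \<in> W \<and> c \<in> K}" "y \<in> {w + c * u |w c. w \<in> W \<and> c \<in> K}"
    then obtain w c w' c' where h: "x = w + c*u" "y = w' + c'*u" "w \<in> W" "c \<in> K" "w' \<in> W" "c' \<in> K" by blast
    have "x + y = (w + w') + (c + c') * u" using h(1,2) by (simp add: algebra_simps)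
    moreover have "w + w' \<in> W" using ksubD(2)[OF W h(3) h(5)] .
    moreover have "c + c' \<in> K" using Kadd[OF h(4) h(6)] .
    ultimately show "x + y \<in> {w + c * u |w c. w \<in> W \<and> c \<in> K}" by blast
  next
    fix k x assume k: "k \<in> K" and "x \<in> {w + c * u |w c. w \<in> W \<and> c \<in> K}"
    then obtain w c where h: "x = w + c*u" "w \<in> W" "c \<in> K" by blast
    have "k * x = k * w + (k * c) * u" using h(1) by (simp add: algebra_simps)
    moreover have "k * w \<in> W" using ksubD(3)[OF W k h(2)] .
    moreover have "k * c \<in> K" using Kmul[OF k h(3)] .
    ultimately show "k * x \<in> {w + c * u |w c. w \<in> W \<and> c \<in> K}" by blast
  qed
qed

lemma ksub_card_rel:
  assumes "ksub K W" "ksub K U" "W \<subseteq> U"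
  shows "\<exists>e. card U = card W * Q ^ e"
  using assms
proof (induction "card U - card W" arbitrary: W rule: less_induct)
  case less
  show ?case
  proof (cases "W = U")
    case True then show ?thesis by (intro exI[of _ 0]) simp
  next
    case False
    then obtain u where u: "u \<in> U" "u \<notin> W" using less.prems by blast
    define W' where "W' = {w + c*u | w c. w \<in> W \<and> c \<in> K}"
    have cW': "card W' = card W * Q" and sW': "ksub K W'" using growth[OF less.prems(1) u(2)] W'_def by auto
    have W'U: "W' \<subseteq> U" unfolding W'_def using less.prems u ksubD by blast
    have "card W > 0" using less.prems(1) ksubD(1) by (metis card_gt_0_iff empty_iff finite)
    then have "card W < card W'" using cW' Q2 by simp
    moreover have "card W' \<le> card U" using W'U by (simp add: card_mono)
    ultimately have "card U - card W' < card U - card W" by simp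
    then obtain e where "card U = card W' * Q ^ e" using less.hyps sW' less.prems(2) W'U by blast
    then show ?thesis using cW' by (intro exI[of _ "Suc e"]) (simp add: mult_ac)
  qed
qed

lemma ksub_card: "ksub K U \<Longrightarrow> \<exists>e. card U = Q ^ e"
  using ksub_card_rel[OF ksub_zero, of U] ksubD(1)[of U] by auto

lemma ksub_proper:
  assumes "ksub K W" "ksub K U" "W \<subset> U"
  shows "\<exists>e. card U = card W * Q ^ Suc e"
proof -
  obtain e where e: "card U = card W * Q ^ e" using ksub_card_rel assms by blast
  have "e \<noteq> 0"
  proof
    assume "e = 0"
    then have "card U = card W" using e by simp
    then show False using assms(3) by (metis card_subset_eq finite psubset_eq)
  qed
  then show ?thesis using e by (cases e) auto
qed

lemma scl_K: assumes "ksub K U" "y \<in> K" "y \<noteq> 0" shows "scl U y = U"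
proof -
  have "scl U y \<subseteq> U" unfolding scl_def using ksubD(3)[OF assms(1) assms(2)] by (auto simp: mult.commute)
  then show ?thesis using card_scl[OF assms(3)] by (metis card_subset_eq finite)
qed

end

lemma dimq_card_eq: "card X = card Y \<Longrightarrow> dimq q X = dimq q Y"
  by (simp add: dimq_def)

lemma scl_sum: "scl (subspace_sum U V) c = subspace_sum (scl U c) (scl V c)"
  unfolding scl_def subspace_sum_def
proof (intro equalityI subsetI)
  fix x assume "x \<in> (\<lambda>x. x * c) ` {u + v |u v. u \<in> U \<and> v \<in> V}"
  then obtain u v where "x = (u + v) * c" "u \<in> U" "v \<in> V" by blast
  then show "x \<in> {u + v |u v. u \<in> (\<lambda>x. x * c) ` U \<and> v \<in> (\<lambda>x. x * c) ` V}"
    by (auto simp: distrib_right)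
next
  fix x assume "x \<in> {u + v |u v. u \<in> (\<lambda>x. x * c) ` U \<and> v \<in> (\<lambda>x. x * c) ` V}"
  then obtain u v where "x = u * c + v * c" "u \<in> U" "v \<in> V" by blast
  then have "x = (u + v) * c" "u + v \<in> {u + v |u v. u \<in> U \<and> v \<in> V}" by (auto simp: distrib_right)
  then show "x \<in> (\<lambda>x. x * c) ` {u + v |u v. u \<in> U \<and> v \<in> V}" by blast
qed

lemma scl_int: "(c::'a::{finite,field}) \<noteq> 0 \<Longrightarrow> scl (U \<inter> V) c = scl U c \<inter> scl V c"
  unfolding scl_def by (auto simp: image_Int inj_on_def)

lemma dist_scl: "(c::'a::{finite,field}) \<noteq> 0 \<Longrightarrow> subspace_dist q (scl U c) (scl V c) = subspace_dist q U V"
proof -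
  assume c: "c \<noteq> 0"
  have "card (scl (subspace_sum U V) c) = card (subspace_sum U V)" "card (scl (U \<inter> V) c) = card (U \<inter> V)"
    unfolding scl_def by (rule card_image, use c in \<open>auto simp: inj_on_def\<close>)+
  then show ?thesis unfolding subspace_dist_def
    using scl_sum[of U V c] scl_int[OF c, of U V] by (metis dimq_card_eq)
qed

lemma scl_scl: "scl (scl U a) b = scl U (a*b)"
  unfolding scl_def by (auto simp: image_image mult.assoc)

lemma scl_one: "scl U 1 = U" unfolding scl_def by simp

locale kfq = kf +
  fixes q m :: nat
  assumes Q_def: "Q = q ^ m" and q2: "q \<ge> 2"
begin

lemma dimq_pow: "card U = q ^ d \<Longrightarrow> dimq q U = d"
  unfolding dimq_def using q2 by (intro the_equality) (auto dest: power_inject_exp)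

lemma dimq_Q: "card U = Q ^ e \<Longrightarrow> dimq q U = m * e"
  using dimq_pow[of U "m*e"] by (simp add: Q_def power_mult)

lemma dist_ge:
  assumes U: "ksub K U" and V: "ksub K V" and c: "card U = card V" and ne: "U \<noteq> V"
  shows "2 * m \<le> subspace_dist q U V"
proof -
  define S where "S = subspace_sum U V"
  define I where "I = U \<inter> V"
  have sS: "ksub K S" unfolding S_def by (rule ksub_sumsp[OF U V])
  have sI: "ksub K I" unfolding I_def by (rule ksub_int[OF U V])
  have US: "U \<subseteq> S" unfolding S_def subspace_sum_def using ksubD(1)[OF V] by force
  have VS: "V \<subseteq> S" unfolding S_def subspace_sum_def using ksubD(1)[OF U] by force
  have "U \<noteq> S"
  proof
    assume "U = S"
    then have "V \<subseteq> U" using VS by simp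
    then show False using c ne by (metis card_subset_eq finite)
  qed
  then have US': "U \<subset> S" using US by blast
  have "I \<noteq> U"
  proof
    assume "I = U"
    then have "U \<subseteq> V" unfolding I_def by blast
    then show False using c ne by (metis card_subset_eq finite)
  qed
  then have IU: "I \<subset> U" unfolding I_def by blast
  obtain c0 where c0: "card I = Q ^ c0" using ksub_card[OF sI] by blast
  obtain e1 where e1: "card U = card I * Q ^ Suc e1" using ksub_proper[OF sI U IU] by blast
  obtain e2 where e2: "card S = card U * Q ^ Suc e2" using ksub_proper[OF U sS US'] by blast
  have "dimq q S = m * (c0 + Suc e1 + Suc e2)" using c0 e1 e2 by (intro dimq_Q) (simp add: power_add)
  moreover have "dimq q I = m * c0" using c0 by (rule dimq_Q)
  ultimately show ?thesis unfolding subspace_dist_def S_def[symmetric] I_def[symmetric]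
    by (simp add: algebra_simps)
qed

lemma dist_le:
  assumes U: "ksub K U" and V: "ksub K V" and A: "A \<subseteq> U \<inter> V" and B: "subspace_sum U V \<subseteq> B"
    and cA: "card A = Q ^ a" and cB: "card B = Q ^ b"
  shows "subspace_dist q U V \<le> m * b - m * a"
proof -
  obtain c where c: "card (U \<inter> V) = Q ^ c" using ksub_card[OF ksub_int[OF U V]] by blast
  obtain d where d: "card (subspace_sum U V) = Q ^ d" using ksub_card[OF ksub_sumsp[OF U V]] by blast
  have "Q ^ a \<le> Q ^ c" using card_mono[OF _ A] cA c by simp
  then have ac: "a \<le> c" using Q2 by (simp add: power_le_imp_le_exp)
  have "Q ^ d \<le> Q ^ b" using card_mono[OF _ B] cB d by simp
  then have db: "d \<le> b" using Q2 by (simp add: power_le_imp_le_exp)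
  have "subspace_dist q U V = m * d - m * c" unfolding subspace_dist_def using dimq_Q[OF c] dimq_Q[OF d] by simp
  also have "\<dots> \<le> m * b - m * a" proof -
    have "m * a \<le> m * c" "m * d \<le> m * b" using ac db by simp_all
    then show ?thesis by linarith
  qed
  finally show ?thesis .
qed

lemma dist_same: "ksub K U \<Longrightarrow> subspace_dist q U U = 0"
proof -
  assume U: "ksub K U"
  have "subspace_sum U U = U"
  proof
    show "subspace_sum U U \<subseteq> U" unfolding subspace_sum_def using ksubD(2)[OF U] by blast
    show "U \<subseteq> subspace_sum U U" unfolding subspace_sum_def using ksubD(1)[OF U] by force
  qed
  then show ?thesis by (simp add: subspace_dist_def)
qed

end

locale kpow = kfq +
  fixes b :: "'a::{finite,field}" and L :: nat
  assumes L_def: "L = minpoly_degree K b"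
    and Lex: "\<exists>p. p \<noteq> 0 \<and> (\<forall>i. coeff p i \<in> K) \<and> poly p b = 0"
    and L2: "2 \<le> L"
begin

abbreviation "V t \<equiv> power_span K b t"

lemma V0: "V 0 = {0}" unfolding power_span_def by auto

lemma VSuc: "y \<in> V (Suc t) \<longleftrightarrow> (\<exists>v\<in>V t. \<exists>c\<in>K. y = v + c * b ^ t)"
proof
  assume "y \<in> V (Suc t)"
  then obtain c where c: "\<forall>j<Suc t. c j \<in> K" "y = (\<Sum>j<Suc t. c j * b ^ j)" unfolding power_span_def by blast
  have "(\<Sum>j<t. c j * b ^ j) \<in> V t" unfolding power_span_def using c by auto
  then show "\<exists>v\<in>V t. \<exists>c\<in>K. y = v + c * b ^ t" using c by auto
next
  assume "\<exists>v\<in>V t. \<exists>c\<in>K. y = v + c * b ^ t"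
  then obtain v c0 where v: "v \<in> V t" and c0: "c0 \<in> K" and y: "y = v + c0 * b ^ t" by blast
  obtain d where d: "\<forall>j<t. d j \<in> K" "v = (\<Sum>j<t. d j * b ^ j)" using v unfolding power_span_def by blast
  define c where "c = d(t := c0)"
  have "(\<Sum>j<t. c j * b ^ j) = (\<Sum>j<t. d j * b ^ j)" by (rule sum.cong) (auto simp: c_def)
  then have "y = (\<Sum>j<Suc t. c j * b ^ j)" using y d by (simp add: c_def)
  moreover have "\<forall>j<Suc t. c j \<in> K" using d c0 by (auto simp: c_def less_Suc_eq)
  ultimately show "y \<in> V (Suc t)" unfolding power_span_def by blast
qed

lemma ksub_V: "ksub K (V t)"
  unfolding ksub_def power_span_def
proof (intro conjI ballI)
  show "0 \<in> {\<Sum>j<t. c j * b ^ j |c. \<forall>j<t. c j \<in> K}" using K0 by (intro CollectI exI[of _ "\<lambda>_. 0"]) auto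
next
  fix x y assume "x \<in> {\<Sum>j<t. c j * b ^ j |c. \<forall>j<t. c j \<in> K}" "y \<in> {\<Sum>j<t. c j * b ^ j |c. \<forall>j<t. c j \<in> K}"
  then obtain c d where "x = (\<Sum>j<t. c j * b ^ j)" "y = (\<Sum>j<t. d j * b ^ j)" "\<forall>j<t. c j \<in> K" "\<forall>j<t. d j \<in> K" by blast
  then show "x + y \<in> {\<Sum>j<t. c j * b ^ j |c. \<forall>j<t. c j \<in> K}"
    by (intro CollectI exI[of _ "\<lambda>j. c j + d j"] conjI) (auto intro: Kadd simp: sum.distrib distrib_right)
next
  fix k x assume k: "k \<in> K" and "x \<in> {\<Sum>j<t. c j * b ^ j |c. \<forall>j<t. c j \<in> K}"
  then obtain c where "x = (\<Sum>j<t. c j * b ^ j)" "\<forall>j<t. c j \<in> K" by blast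
  then show "k * x \<in> {\<Sum>j<t. c j * b ^ j |c. \<forall>j<t. c j \<in> K}"
    using k by (intro CollectI exI[of _ "\<lambda>j. k * c j"] conjI) (auto intro: Kmul simp: sum_distrib_left mult.assoc)
qed

lemma V_Suc_mono: "V t \<subseteq> V (Suc t)"
  using VSuc K0 by fastforce

lemma V_mono: "s \<le> t \<Longrightarrow> V s \<subseteq> V t"
  using lift_Suc_mono_le[of V, OF V_Suc_mono] by blast

lemma pow_in: "b ^ t \<in> V (Suc t)"
  using VSuc[of "b^t" t] ksubD(1)[OF ksub_V] K1 by force

lemma shift: "v \<in> V a \<Longrightarrow> v * b ^ c \<in> V (a + c)"
proof (induction a arbitrary: v)
  case 0 then show ?case using V0 ksubD(1)[OF ksub_V] by simp
next
  case (Suc a)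
  then obtain w k where w: "w \<in> V a" "k \<in> K" "v = w + k * b ^ a" using VSuc by blast
  have "w * b ^ c \<in> V (a + c)" using Suc.IH w by simp
  moreover have "v * b ^ c = w * b ^ c + k * b ^ (a + c)" using w by (simp add: algebra_simps power_add)
  ultimately have "v * b ^ c \<in> V (Suc (a + c))" using w(2) by (intro VSuc[THEN iffD2]) blast
  then show ?case by simp
qed

lemma V1: "V 1 = K"
proof -
  have "y \<in> V (Suc 0) \<longleftrightarrow> y \<in> K" for y unfolding VSuc V0 by simp
  then show ?thesis by auto
qed

lemma L_least: "\<And>p. p \<noteq> 0 \<Longrightarrow> (\<forall>i. coeff p i \<in> K) \<Longrightarrow> poly p b = 0 \<Longrightarrow> L \<le> degree p"
proof -
  fix p :: "'a poly" assume "p \<noteq> 0" "\<forall>i. coeff p i \<in> K" "poly p b = 0"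
  then have "\<exists>p'. p' \<noteq> 0 \<and> degree p' = degree p \<and> (\<forall>i. coeff p' i \<in> K) \<and> poly p' b = 0" by blast
  then show "L \<le> degree p" unfolding L_def minpoly_degree_def by (rule Least_le)
qed

lemma L_ex: "\<exists>p. p \<noteq> 0 \<and> degree p = L \<and> (\<forall>i. coeff p i \<in> K) \<and> poly p b = 0"
proof -
  obtain p where p: "p \<noteq> 0" "\<forall>i. coeff p i \<in> K" "poly p b = 0" using Lex by blast
  have "\<exists>d p. p \<noteq> 0 \<and> degree p = d \<and> (\<forall>i. coeff p i \<in> K) \<and> poly p b = 0"
    using p by blast
  from LeastI_ex[OF this] show ?thesis unfolding L_def minpoly_degree_def .
qed

lemma not_in: assumes "t < L" shows "b ^ t \<notin> V t"
proof
  assume "b ^ t \<in> V t"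
  then obtain c where c: "\<forall>j<t. c j \<in> K" "b ^ t = (\<Sum>j<t. c j * b ^ j)" unfolding power_span_def by blast
  define p :: "'a poly" where "p = monom 1 t - (\<Sum>j<t. monom (c j) j)"
  have cp: "coeff p i = (if i = t then 1 else 0) - (if i < t then c i else 0)" for i
    unfolding p_def by (simp add: coeff_sum coeff_monom sum.delta' Groups_Big.sum.If_cases)
  have "coeff p t = 1" using cp by simp
  then have p0: "p \<noteq> 0" by auto
  have dp: "degree p \<le> t"
    by (rule degree_le) (simp add: cp)
  have "\<forall>i. coeff p i \<in> K"
  proof
    fix i
    have a: "(if i = t then 1 else 0) \<in> K" using K0 K1 by simp
    have b: "(if i < t then c i else 0) \<in> K" using K0 c(1) by simp
    show "coeff p i \<in> K" unfolding cp using Kadd[OF a Kneg[OF b]] by simp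
  qed
  moreover have "poly p b = 0" using c(2) by (simp add: p_def poly_sum poly_monom)
  ultimately have "L \<le> degree p" using L_least p0 by blast
  then show False using dp assms by simp
qed

lemma in_L: "b ^ L \<in> V L"
proof -
  obtain p where p: "p \<noteq> 0" "degree p = L" "\<forall>i. coeff p i \<in> K" "poly p b = 0" using L_ex by blast
  define a where "a = coeff p L"
  have a0: "a \<noteq> 0" using p(1,2) unfolding a_def by (metis leading_coeff_0_iff)
  have "poly p b = (\<Sum>i\<le>degree p. coeff p i * b ^ i)" by (rule poly_altdef)
  also have "\<dots> = (\<Sum>i<L. coeff p i * b ^ i) + a * b ^ L" using p(2) by (simp add: a_def lessThan_Suc_atMost[symmetric])
  finally have e: "a * b ^ L = - (\<Sum>i<L. coeff p i * b ^ i)" using p(4) by (simp add: eq_neg_iff_add_eq_0 add.commute)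
  have "b ^ L = inverse a * (a * b ^ L)" using a0 by simp
  also have "\<dots> = (\<Sum>i<L. (- (inverse a * coeff p i)) * b ^ i)"
    unfolding e by (simp add: sum_distrib_left sum_negf mult.assoc)
  finally have bl: "b ^ L = (\<Sum>i<L. (- (inverse a * coeff p i)) * b ^ i)" .
  have "\<forall>i<L. - (inverse a * coeff p i) \<in> K"
    using p(3) by (auto intro!: Kmul Kneg Kinv simp: a_def)
  then show ?thesis unfolding power_span_def
    by (intro CollectI exI[of _ "\<lambda>i. - (inverse a * coeff p i)"] conjI bl) simp
qed

end

context kpow
begin

lemma b_notK: "b \<notin> K"
  using not_in[of 1] L2 V1 by simp

lemma b_nz: "b \<noteq> 0" using b_notK K0 by auto

lemma cardV: "t \<le> L \<Longrightarrow> card (V t) = Q ^ t"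
proof (induction t)
  case 0 then show ?case by (simp add: V0)
next
  case (Suc t)
  have eq: "V (Suc t) = {w + c * b ^ t | w c. w \<in> V t \<and> c \<in> K}" using VSuc by blast
  have "card (V (Suc t)) = card (V t) * Q"
    unfolding eq by (rule growth(1)[OF ksub_V not_in]) (use Suc in simp)
  then show ?case using Suc by simp
qed

lemma closeL: assumes "x \<in> V L" shows "x * b \<in> V L"
proof -
  have "x * b ^ 1 \<in> V (Suc L)" using shift[OF assms, of 1] by simp
  then obtain v c where v: "v \<in> V L" "c \<in> K" "x * b = v + c * b ^ L" using VSuc by auto
  have "c * b ^ L \<in> V L" using ksubD(3)[OF ksub_V v(2) in_L] .
  then show ?thesis using ksubD(2)[OF ksub_V v(1)] v(3) by simp
qed

lemma powL: "x \<in> V L \<Longrightarrow> x * b ^ j \<in> V L"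
proof (induction j)
  case 0 then show ?case by simp
next
  case (Suc j)
  have eq: "x * b ^ Suc j = (x * b ^ j) * b" by (simp add: mult.assoc mult.commute)
  show ?case unfolding eq by (rule closeL[OF Suc.IH[OF Suc.prems]])
qed

lemma mulL: assumes x: "x \<in> V L" and y: "y \<in> V L" shows "x * y \<in> V L"
proof -
  obtain c where c: "\<forall>j<L. c j \<in> K" "y = (\<Sum>j<L. c j * b ^ j)" using y unfolding power_span_def by blast
  have "x * y = (\<Sum>j<L. c j * (x * b ^ j))" unfolding c(2) by (simp add: sum_distrib_left mult_ac)
  also have "\<dots> \<in> V L"
    by (rule ksub_sum[OF ksub_V]) (use c(1) powL[OF x] in \<open>auto intro: ksubD(3)[OF ksub_V]\<close>)
  finally show ?thesis .
qed

lemma one_in: "1 \<le> t \<Longrightarrow> 1 \<in> V t"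
  using V_mono[of 1 t] V1 K1 by auto

lemma stab:
  assumes t: "1 \<le> t" "t < L" and sub: "scl (V t) y \<subseteq> V t"
  shows "y \<in> K"
proof -
  have mul: "z \<in> V t \<Longrightarrow> z * y \<in> V t" for z using sub unfolding scl_def by auto
  have yV: "y \<in> V t" using mul[OF one_in[OF t(1)]] by simp
  have "\<forall>u. 1 \<le> u \<longrightarrow> u \<le> t \<longrightarrow> y \<in> V u \<longrightarrow> y \<in> V 1"
  proof (intro allI)
    fix u show "1 \<le> u \<longrightarrow> u \<le> t \<longrightarrow> y \<in> V u \<longrightarrow> y \<in> V 1"
    proof (induction u)
      case 0 then show ?case by simp
    next
      case (Suc u)
      show ?case
      proof (intro impI)
        assume h: "1 \<le> Suc u" "Suc u \<le> t" "y \<in> V (Suc u)"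
        show "y \<in> V 1"
        proof (cases "u = 0")
          case True then show ?thesis using h by simp
        next
          case False
          obtain v c where v: "v \<in> V u" "c \<in> K" "y = v + c * b ^ u" using h(3) VSuc by auto
          have "Suc (t - u) \<le> t" using False h(2) by simp
          then have "b ^ (t - u) \<in> V t"
            using pow_in[of "t - u"] V_mono[of "Suc (t - u)" t] by blast
          then have "b ^ (t - u) * y \<in> V t" using mul by blast
          moreover have "v * b ^ (t - u) \<in> V t" using shift[OF v(1), of "t - u"] h(2) by simp
          moreover have eqq: "b ^ (t - u) * y = v * b ^ (t - u) + c * b ^ t"
          proof -
            have "b ^ (t - u) * (c * b ^ u) = c * b ^ t" using h(2)
              by (simp add: mult_ac power_add[symmetric])
            then show ?thesis using v(3) by (simp add: distrib_left mult.commute)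
          qed
          ultimately have cb0: "b ^ (t - u) * y - v * b ^ (t - u) \<in> V t"
            using ksub_diff[OF ksub_V] by blast
          have "b ^ (t - u) * y - v * b ^ (t - u) = c * b ^ t" using eqq by simp
          then have cb: "c * b ^ t \<in> V t" using cb0 by simp
          have "c = 0"
          proof (rule ccontr)
            assume c0: "c \<noteq> 0"
            have "inverse c * (c * b ^ t) \<in> V t" using ksubD(3)[OF ksub_V Kinv[OF v(2)] cb] .
            then have "b ^ t \<in> V t" using c0 by (simp add: mult.assoc[symmetric])
            then show False using not_in[OF t(2)] by simp
          qed
          then have "y \<in> V u" using v by simp
          then show ?thesis using Suc.IH False h(2) by simp
        qed
      qed
    qed
  qed
  then have "y \<in> V 1" using yV t by blast
  then show ?thesis using V1 by simp
qed

lemma stabL: assumes "y \<in> V L" "y \<noteq> 0" shows "scl (V L) y = V L"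
proof -
  have "scl (V L) y \<subseteq> V L" unfolding scl_def using mulL assms(1) by auto
  then show ?thesis using card_scl[OF assms(2)] by (metis card_subset_eq finite)
qed

lemma b_in_VL: "b \<in> V L"
  using pow_in[of 1] V_mono[of 2 L] L2 by (auto simp: numeral_2_eq_2)

lemma dist_b: assumes t: "1 \<le> t" "t < L"
  shows "subspace_dist q (V t) (scl (V t) b) \<le> 2 * m"
proof -
  define A where "A = scl (V (t - 1)) b"
  have A1: "A \<subseteq> V t" unfolding A_def scl_def using shift[of _ "t - 1" 1] t by auto
  have A2: "A \<subseteq> scl (V t) b" unfolding A_def scl_def using V_mono[of "t - 1" t] by auto
  have cA: "card A = Q ^ (t - 1)" unfolding A_def using card_scl[OF b_nz] cardV t by simp
  have S: "subspace_sum (V t) (scl (V t) b) \<subseteq> V (Suc t)"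
  proof
    fix x assume "x \<in> subspace_sum (V t) (scl (V t) b)"
    then obtain u v where uv: "x = u + v * b" "u \<in> V t" "v \<in> V t" unfolding subspace_sum_def scl_def by blast
    have "u \<in> V (Suc t)" using V_Suc_mono uv(2) by auto
    moreover have "v * b \<in> V (Suc t)" using shift[OF uv(3), of 1] by simp
    ultimately show "x \<in> V (Suc t)" using ksubD(2)[OF ksub_V] uv(1) by simp
  qed
  have cB: "card (V (Suc t)) = Q ^ Suc t" using cardV t by simp
  have "subspace_dist q (V t) (scl (V t) b) \<le> m * Suc t - m * (t - 1)"
    by (rule dist_le[OF ksub_V ksub_scl[OF ksub_V] _ S cA cB]) (use A1 A2 in blast)
  also have "\<dots> = 2 * m" using t by (cases t) (auto simp: algebra_simps)
  finally show ?thesis .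
qed

lemma L_le: assumes "card (UNIV :: 'a set) = Q ^ s" shows "L \<le> s"
proof (rule ccontr)
  assume "\<not> L \<le> s"
  then have "card (V (Suc s)) = Q ^ Suc s" using cardV by simp
  moreover have "card (V (Suc s)) \<le> Q ^ s" using assms card_mono[of UNIV "V (Suc s)"] by simp
  ultimately show False using Q2 by simp
qed

lemma VL_field: "V L = {x::'a. x ^ (Q ^ L) = x}"
proof -
  have "Q \<le> Q ^ L" using Q2 L2 by (simp add: self_le_power)
  then have QL: "Q ^ L \<ge> 2" using Q2 by linarith
  have sub: "V L \<subseteq> {x::'a. x ^ (Q ^ L) = x}"
  proof
    fix x assume x: "x \<in> V L"
    have "x ^ (Q ^ L) = x"
    proof (cases "x = 0")
      case True then show ?thesis using QL Q2 by simp
    next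
      case False
      have cl: "\<forall>a\<in>V L - {0}. \<forall>c\<in>V L - {0}. a * c \<in> V L - {0}"
        using mulL by simp
      have "x ^ card (V L - {0}) = 1"
        by (rule prod_pow_one[OF _ _ cl]) (use x False in simp_all)
      moreover have "card (V L - {0}) = Q ^ L - 1"
        using cardV[of L] ksubD(1)[OF ksub_V] by (simp add: card_Diff_singleton)
      ultimately have e1: "x ^ (Q ^ L - 1) = 1" by simp
      have "Q ^ L = Suc (Q ^ L - 1)" using QL by simp
      then have "x ^ (Q ^ L) = x ^ Suc (Q ^ L - 1)" by (rule arg_cong)
      also have "\<dots> = x" using e1 by simp
      finally show ?thesis .
    qed
    then show "x \<in> {x::'a. x ^ (Q ^ L) = x}" by simp
  qed
  define P :: "'a poly" where "P = monom 1 (Q^L) - monom 1 1"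
  have cP: "coeff P (Q^L) = 1" using QL by (simp add: P_def coeff_monom)
  then have P0: "P \<noteq> 0" by auto
  have dP: "degree P \<le> Q ^ L" unfolding P_def
    using QL by (intro degree_diff_le) (auto intro: order.trans[OF degree_monom_le])
  have "{x::'a. x ^ (Q ^ L) = x} = {x. poly P x = 0}" by (auto simp: P_def poly_monom)
  then have "card {x::'a. x ^ (Q ^ L) = x} \<le> Q ^ L" using card_poly_roots_bound[OF P0] dP by simp
  moreover have "card (V L) \<le> card {x::'a. x ^ (Q ^ L) = x}" using card_mono[OF _ sub] by simp
  ultimately have "card (V L) = card {x::'a. x ^ (Q ^ L) = x}" using cardV[of L] by simp
  then show ?thesis using card_subset_eq[OF _ sub] by simp
qed

end

definition Fy :: "'a::{finite,field} set list \<Rightarrow> 'a \<Rightarrow> 'a set list" where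
  "Fy F y = map (\<lambda>U. scl U y) F"

lemma card_fibres:
  assumes "finite A" "\<And>a. a \<in> A \<Longrightarrow> card {x\<in>A. g x = g a} = k"
  shows "card A = card (g ` A) * k"
proof -
  have A: "A = (\<Union>z\<in>g ` A. {x\<in>A. g x = z})" by auto
  have "card A = (\<Sum>z\<in>g ` A. card {x\<in>A. g x = z})"
    by (subst A, rule card_UN_disjoint) (use assms in auto)
  also have "\<dots> = (\<Sum>z\<in>g ` A. k)" using assms(2) by (intro sum.cong) auto
  finally show ?thesis by simp
qed

lemma length_Fy [simp]: "length (Fy F y) = length F" by (simp add: Fy_def)
lemma nth_Fy [simp]: "i < length F \<Longrightarrow> Fy F y ! i = scl (F ! i) y" by (simp add: Fy_def)

lemma Fy_Fy: "Fy (Fy F a) c = Fy F (a * c)" by (simp add: Fy_def scl_scl)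
lemma Fy_1: "Fy F 1 = F" by (simp add: Fy_def scl_one)

lemma orbit_eq:
  assumes prim: "primitive_element \<alpha>" and a0: "\<alpha> \<noteq> 0"
  shows "orbit_flag \<alpha> F = {Fy F y | y. y \<noteq> 0}"
proof -
  have "orbit_flag \<alpha> F = {Fy F (\<alpha> ^ j) | j. True}" unfolding orbit_flag_def Fy_def scl_def by simp
  also have "\<dots> = {Fy F y | y. y \<noteq> 0}"
  proof (intro equalityI subsetI)
    fix G assume "G \<in> {Fy F (\<alpha> ^ j) | j. True}"
    then obtain j where "G = Fy F (\<alpha> ^ j)" by blast
    then show "G \<in> {Fy F y | y. y \<noteq> 0}" using a0 by auto
  next
    fix G assume "G \<in> {Fy F y | y. y \<noteq> 0}"
    then obtain y where "G = Fy F y" "y \<noteq> 0" by blast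
    moreover obtain j where "y = \<alpha> ^ j" using prim \<open>y \<noteq> 0\<close> unfolding primitive_element_def by blast
    ultimately show "G \<in> {Fy F (\<alpha> ^ j) | j. True}" by blast
  qed
  finally show ?thesis .
qed

lemma flag_dist_Fy:
  "flag_dist q F (Fy F y) = (\<Sum>i<length F. subspace_dist q (F ! i) (scl (F ! i) y))"
  unfolding flag_dist_def by simp

lemma flag_dist_scale:
  assumes "c \<noteq> 0" "length G = length H"
  shows "flag_dist q (Fy G c) (Fy H c) = flag_dist q G H"
  unfolding flag_dist_def using assms by (simp add: dist_scl)

lemma dists_eq:
  assumes prim: "primitive_element \<alpha>" and a0: "\<alpha> \<noteq> 0"
  shows "{flag_dist q G H | G H. G \<in> orbit_flag \<alpha> F \<and> H \<in> orbit_flag \<alpha> F \<and> G \<noteq> H}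
       = {flag_dist q F (Fy F y) | y. y \<noteq> 0 \<and> Fy F y \<noteq> F}"
proof (intro equalityI subsetI)
  fix d assume "d \<in> {flag_dist q G H | G H. G \<in> orbit_flag \<alpha> F \<and> H \<in> orbit_flag \<alpha> F \<and> G \<noteq> H}"
  then obtain a c where ac: "a \<noteq> 0" "c \<noteq> 0" "Fy F a \<noteq> Fy F c" "d = flag_dist q (Fy F a) (Fy F c)"
    unfolding orbit_eq[OF prim a0] by blast
  define y where "y = c / a"
  have y0: "y \<noteq> 0" using ac by (simp add: y_def)
  have "Fy (Fy F a) (inverse a) = F" using ac by (simp add: Fy_Fy Fy_1)
  moreover have "Fy (Fy F c) (inverse a) = Fy F y" by (simp add: Fy_Fy y_def divide_inverse)
  ultimately have "d = flag_dist q F (Fy F y)"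
    using ac flag_dist_scale[of "inverse a" "Fy F a" "Fy F c" q] by simp
  moreover have "Fy F y \<noteq> F"
  proof
    assume "Fy F y = F"
    then have "Fy (Fy F y) a = Fy F a" by simp
    then have "Fy F c = Fy F a" using ac by (simp add: Fy_Fy y_def)
    then show False using ac by simp
  qed
  ultimately show "d \<in> {flag_dist q F (Fy F y) | y. y \<noteq> 0 \<and> Fy F y \<noteq> F}" using y0 by blast
next
  fix d assume "d \<in> {flag_dist q F (Fy F y) | y. y \<noteq> 0 \<and> Fy F y \<noteq> F}"
  then obtain y where y: "y \<noteq> 0" "Fy F y \<noteq> F" "d = flag_dist q F (Fy F y)" by blast
  have F1: "F \<in> orbit_flag \<alpha> F" unfolding orbit_eq[OF prim a0]
    by (rule CollectI, rule exI[of _ 1]) (simp add: Fy_1)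
  have F2: "Fy F y \<in> orbit_flag \<alpha> F" unfolding orbit_eq[OF prim a0]
    by (rule CollectI, rule exI[of _ y]) (simp add: y(1))
  show "d \<in> {flag_dist q G H | G H. G \<in> orbit_flag \<alpha> F \<and> H \<in> orbit_flag \<alpha> F \<and> G \<noteq> H}"
    by (rule CollectI, rule exI[of _ F], rule exI[of _ "Fy F y"]) (use y F1 F2 in simp)
qed


locale flagctx = kpow +
  fixes ss :: "nat list" and s n :: nat
  assumes r2: "length ss \<ge> 2" and s_pos: "1 \<le> ss ! 0"
    and s_inc: "\<forall>i. Suc i < length ss \<longrightarrow> ss ! i < ss ! Suc i"
    and s_L: "ss ! (length ss - 1) \<le> L" and s_s: "ss ! (length ss - 1) < s"
    and cardU: "card (UNIV :: 'a set) = Q ^ s" and n_eq: "n = m * s"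
begin

abbreviation "r \<equiv> length ss"
abbreviation "FF \<equiv> map V ss"
abbreviation "DD y i \<equiv> subspace_dist q (V (ss ! i)) (scl (V (ss ! i)) y)"
abbreviation "Dset \<equiv> {flag_dist q FF (Fy FF y) | y. y \<noteq> 0 \<and> Fy FF y \<noteq> FF}"

lemma ss_ne: "ss \<noteq> []" using r2 by auto
lemma r_pos: "0 < r" using r2 by auto
lemma r1: "1 < r" using r2 by auto

lemma smono: "i < j \<Longrightarrow> j < r \<Longrightarrow> ss ! i < ss ! j"
proof (induction j)
  case 0 then show ?case by simp
next
  case (Suc j)
  then show ?case
  proof (cases "i = j")
    case True then show ?thesis using s_inc Suc by simp
  next
    case False
    then have "ss ! i < ss ! j" using Suc by simp
    also have "\<dots> < ss ! Suc j" using s_inc Suc by simp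
    finally show ?thesis .
  qed
qed

lemma s_le_last: assumes "i < r" shows "ss ! i \<le> ss ! (r - 1)"
proof -
  have "i < r - 1 \<or> i = r - 1" using assms by linarith
  then show ?thesis using smono[of i "r - 1"] assms r_pos by auto
qed

lemma sL: "i < r \<Longrightarrow> ss ! i \<le> L" using s_le_last s_L by (meson le_trans)
lemma ss_s: "i < r \<Longrightarrow> ss ! i < s" using s_le_last s_s by (meson le_less_trans)
lemma s1: "i < r \<Longrightarrow> 1 \<le> ss ! i" using smono[of 0 i] s_pos by (cases i) auto
lemma s0L: "ss ! 0 < L" using smono[of 0 1] sL[of 1] r2 by simp

lemma m_pos: "m > 0" using Q2 Q_def by (cases m) auto

lemma ft: "flag_type q FF = map (\<lambda>si. m * si) ss"
proof -
  have all: "\<forall>i<length ss. ss ! i \<le> L" using sL by blast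
  then have allL: "\<forall>si\<in>set ss. si \<le> L" by (simp only: all_set_conv_all_nth)
  have h: "dimq q (V si) = m * si" if "si \<in> set ss" for si
  proof -
    have "si \<le> L" using allL that by blast
    then show ?thesis using dimq_Q[OF cardV[OF \<open>si \<le> L\<close>]] by simp
  qed
  show ?thesis unfolding flag_type_def map_map by (rule map_cong[OF refl]) (simp add: h)
qed

lemma fd: "flag_dist q FF (Fy FF y) = (\<Sum>i<r. DD y i)"
  unfolding flag_dist_Fy by simp

lemma Fy_K: "y \<in> K \<Longrightarrow> y \<noteq> 0 \<Longrightarrow> Fy FF y = FF"
  unfolding Fy_def by (simp add: scl_K[OF ksub_V])

lemma not_K: "y \<noteq> 0 \<Longrightarrow> Fy FF y \<noteq> FF \<Longrightarrow> y \<notin> K" using Fy_K by blast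

lemma comp_ne: assumes "i < r" "ss ! i < L" "y \<notin> K" shows "scl (V (ss ! i)) y \<noteq> V (ss ! i)"
proof
  assume "scl (V (ss ! i)) y = V (ss ! i)"
  then have "y \<in> K" using stab[of "ss ! i" y] s1 assms by simp
  then show False using assms by simp
qed

lemma D_ge: assumes "i < r" "ss ! i < L" "y \<notin> K" "y \<noteq> 0" shows "2 * m \<le> DD y i"
  by (rule dist_ge[OF ksub_V ksub_scl[OF ksub_V]]) (use card_scl[OF assms(4)] comp_ne[OF assms(1-3)] in auto)

lemma D_b_L: assumes "i < r" "ss ! i = L" shows "DD b i = 0"
  using stabL[OF b_in_VL b_nz] dist_same[OF ksub_V] assms by simp

lemma D_b_le: assumes "i < r" "ss ! i < L" shows "DD b i \<le> 2 * m"
  using dist_b[of "ss ! i"] s1 assms by simp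

lemma D_b_le': assumes "i < r" shows "DD b i \<le> (if ss ! i < L then 2 * m else 0)"
  using D_b_le[OF assms] D_b_L[OF assms] sL[OF assms] by (cases "ss ! i < L") auto

lemma Fy_b: "Fy FF b \<noteq> FF"
proof
  assume "Fy FF b = FF"
  then have "Fy FF b ! 0 = FF ! 0" by simp
  moreover have "0 < length FF" using r_pos by simp
  ultimately have "scl (V (ss ! 0)) b = V (ss ! 0)" by (simp del: length_map)
  then show False using comp_ne[of 0 b] r_pos s0L b_notK by simp
qed

lemma fin_D: "finite Dset" by simp

lemma b_D: "flag_dist q FF (Fy FF b) \<in> Dset" using Fy_b b_nz by blast

lemma Dset_ne: "Dset \<noteq> {}" using b_D by blast

lemma LB: assumes "d \<in> Dset" shows "2 * m \<le> d" and "ss ! 1 < L \<Longrightarrow> 4 * m \<le> d"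
proof -
  obtain y where y: "y \<noteq> 0" "Fy FF y \<noteq> FF" "d = flag_dist q FF (Fy FF y)" using assms by blast
  have yK: "y \<notin> K" using not_K y by simp
  have "DD y 0 + DD y 1 = (\<Sum>i\<in>{0,1}. DD y i)" by simp
  also have "\<dots> \<le> (\<Sum>i<r. DD y i)" by (rule sum_mono2) (use r2 in auto)
  finally have sum: "DD y 0 + DD y 1 \<le> d" using y fd by simp
  have d0: "2 * m \<le> DD y 0" using D_ge[of 0 y] r_pos s0L yK y by simp
  show "2 * m \<le> d" using sum d0 by simp
  assume "ss ! 1 < L"
  then have "2 * m \<le> DD y 1" using D_ge[of 1 y] r1 yK y by simp
  then show "4 * m \<le> d" using sum d0 by simp
qed

lemma UB: "Min Dset \<le> (\<Sum>i<r. if ss ! i < L then 2 * m else 0)"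
proof -
  have "Min Dset \<le> flag_dist q FF (Fy FF b)" by (rule Min_le[OF fin_D b_D])
  also have "\<dots> = (\<Sum>i<r. DD b i)" by (rule fd)
  also have "\<dots> \<le> (\<Sum>i<r. if ss ! i < L then 2 * m else 0)" by (rule sum_mono, rule D_b_le') simp
  finally show ?thesis .
qed

lemma Min_in: "Min Dset \<in> Dset" using fin_D Dset_ne by (rule Min_in)

end

lemma list2: "length xs = 2 \<Longrightarrow> xs = [xs ! 0, xs ! 1]"
  by (cases xs; cases "tl xs") auto

context flagctx
begin

lemma r2_L: assumes "Min Dset = 2 * m" shows "r = 2" "ss ! 1 = L"
proof -
  have "\<not> ss ! 1 < L"
  proof
    assume "ss ! 1 < L"
    then have "4 * m \<le> Min Dset" using LB(2)[OF Min_in] by simp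
    then show False using assms m_pos by simp
  qed
  then show L1: "ss ! 1 = L" using sL[OF r1] by simp
  show "r = 2"
  proof (rule ccontr)
    assume "r \<noteq> 2"
    then have "2 < r" using r2 by simp
    then have "ss ! 1 < ss ! 2" using smono by simp
    then show False using sL[of 2] L1 \<open>2 < r\<close> by simp
  qed
qed

lemma part1: "Min Dset = 2 * m \<longleftrightarrow> (\<exists>s1. 1 \<le> s1 \<and> s1 < L \<and> L < s \<and> flag_type q FF = [m * s1, m * L])"
proof
  assume h: "Min Dset = 2 * m"
  note rL = r2_L[OF h]
  have ssl: "ss = [ss ! 0, L]" using list2[OF rL(1)] rL(2) by simp
  have "flag_type q FF = [m * ss ! 0, m * L]" unfolding ft by (subst ssl) simp
  moreover have "ss ! 0 < L" using s0L .
  moreover have "L < s" using s_s rL by simp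
  ultimately show "\<exists>s1. 1 \<le> s1 \<and> s1 < L \<and> L < s \<and> flag_type q FF = [m * s1, m * L]"
    using s_pos by blast
next
  assume "\<exists>s1. 1 \<le> s1 \<and> s1 < L \<and> L < s \<and> flag_type q FF = [m * s1, m * L]"
  then obtain s1 where h: "flag_type q FF = [m * s1, m * L]" by blast
  then have lr: "r = 2" using ft by (metis length_map length_Cons list.size(3) One_nat_def Suc_1)
  have "map (\<lambda>si. m * si) ss ! 1 = m * L" using h ft by simp
  then have "m * ss ! 1 = m * L" using lr by simp
  then have L1: "ss ! 1 = L" using m_pos by simp
  have "Min Dset \<le> (\<Sum>i<r. if ss ! i < L then 2 * m else 0)" by (rule UB)
  also have "\<dots> = 2 * m" using lr L1 s0L by (simp add: numeral_2_eq_2 lessThan_Suc)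
  finally have "Min Dset \<le> 2 * m" .
  moreover have "2 * m \<le> Min Dset" using LB(1)[OF Min_in] .
  ultimately show "Min Dset = 2 * m" by simp
qed

lemma part1b: assumes "Min Dset = 2 * m" "ss ! 0 = 1" shows "FF = [K, {x. x ^ (Q ^ L) = x}]"
proof -
  note rL = r2_L[OF assms(1)]
  have ssl: "ss = [1, L]" using list2[OF rL(1)] rL(2) assms(2) by simp
  show ?thesis using V1 by (subst ssl) (simp add: VL_field)
qed

end

context flagctx
begin

abbreviation "fopt t \<equiv> (if t \<le> n div 2 then t else n - t)"

lemma sumf: "(\<Sum>t\<leftarrow>flag_type q FF. fopt t) = (\<Sum>i<r. fopt (m * ss ! i))"
  unfolding ft sum_list_sum_nth by (simp add: atLeast0LessThan)

lemma fge: assumes "i < r" shows "m \<le> fopt (m * ss ! i)"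
proof -
  have a: "1 \<le> ss ! i" "ss ! i < s" using s1 ss_s assms by auto
  have "m \<le> m * ss ! i" using a by simp
  moreover have "m \<le> n - m * ss ! i"
  proof -
    have "m * 1 \<le> m * (s - ss ! i)" using a by (intro mult_le_mono2) simp
    then show ?thesis using n_eq by (simp add: diff_mult_distrib2)
  qed
  ultimately show ?thesis by simp
qed

lemma fclass: assumes "i < r" "fopt (m * ss ! i) = m" shows "ss ! i = 1 \<or> ss ! i = s - 1"
proof (cases "m * ss ! i \<le> n div 2")
  case True
  then have "m * ss ! i = m * 1" using assms by simp
  then show ?thesis using m_pos by simp
next
  case False
  then have "n - m * ss ! i = m" using assms by simp
  then have "m * (s - ss ! i) = m * 1" using n_eq by (simp add: diff_mult_distrib2)
  then have "s - ss ! i = 1" using m_pos by simp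
  then show ?thesis using ss_s[OF assms(1)] by arith
qed

definition OPT where "OPT \<longleftrightarrow> Min Dset = 2 * (\<Sum>t\<leftarrow>flag_type q FF. fopt t)"

lemma opt_fwd: assumes "OPT" shows "r = 2" "ss ! 0 = 1" "ss ! 1 = s - 1" "L = s"
proof -
  define f where "f i = fopt (m * ss ! i)" for i
  define g where "g i = (if ss ! i < L then 2 * m else 0)" for i
  have h: "Min Dset = 2 * (\<Sum>i<r. f i)" using assms unfolding OPT_def sumf f_def by simp
  have A: "(\<Sum>i<r. m) \<le> (\<Sum>i<r. f i)" by (rule sum_mono) (use fge in \<open>simp add: f_def\<close>)
  have B: "(\<Sum>i<r. g i) \<le> (\<Sum>i<r. 2 * m)" by (rule sum_mono) (simp add: g_def)
  have C: "Min Dset \<le> (\<Sum>i<r. g i)" using UB unfolding g_def .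
  have sf: "(\<Sum>i<r. f i) = (\<Sum>i<r. m)" using A B C h by simp
  have sg: "(\<Sum>i<r. g i) = (\<Sum>i<r. 2 * m)" using A B C h by simp
  have fgeq: "\<forall>j\<in>{..<r}. m \<le> f j" using fge by (simp add: f_def)
  have fi: "f i = m" if "i < r" for i
  proof (rule ccontr)
    assume "f i \<noteq> m"
    then have mf: "m < f i" using fgeq that by force
    have "(\<Sum>i<r. m) < (\<Sum>i<r. f i)"
      by (rule sum_strict_mono_ex1) (use fgeq that mf in auto)
    then show False using sf by simp
  qed
  have gi: "ss ! i < L" if "i < r" for i
  proof (rule ccontr)
    assume "\<not> ss ! i < L"
    then have gl: "g i < 2 * m" using m_pos by (simp add: g_def)
    have gle: "\<forall>j\<in>{..<r}. g j \<le> 2 * m" by (simp add: g_def)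
    have "(\<Sum>i<r. g i) < (\<Sum>i<r. 2 * m)"
      by (rule sum_strict_mono_ex1) (use gle that gl in auto)
    then show False using sg by simp
  qed
  have cl: "ss ! i = 1 \<or> ss ! i = s - 1" if "i < r" for i using fclass[OF that] fi[OF that] by (simp add: f_def)
  show r: "r = 2"
  proof (rule ccontr)
    assume "r \<noteq> 2"
    then have "2 < r" using r2 by simp
    then have "ss ! 0 < ss ! 1" "ss ! 1 < ss ! 2" using smono by auto
    moreover have "ss ! 1 = 1 \<or> ss ! 1 = s - 1" "ss ! 2 = 1 \<or> ss ! 2 = s - 1" using cl \<open>2 < r\<close> by auto
    ultimately show False using s_pos by auto
  qed
  have "ss ! 0 < ss ! 1" using smono r by simp
  moreover have "ss ! 0 = 1 \<or> ss ! 0 = s - 1" "ss ! 1 = 1 \<or> ss ! 1 = s - 1" using cl r by auto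
  ultimately show s0: "ss ! 0 = 1" and s1': "ss ! 1 = s - 1" using s_pos by auto
  have "ss ! 1 < L" using gi r by simp
  moreover have "L \<le> s" using L_le[OF cardU] .
  ultimately show "L = s" using s1' by simp
qed

lemma part2: "OPT \<longleftrightarrow> (L = s \<and> flag_type q FF = [m, m * (L - 1)])"
proof
  assume o: "OPT"
  note oo = opt_fwd[OF o]
  have "ss = [1, L - 1]" using list2[OF oo(1)] oo by simp
  then have "flag_type q FF = [m, m * (L - 1)]" unfolding ft by simp
  then show "L = s \<and> flag_type q FF = [m, m * (L - 1)]" using oo by simp
next
  assume h: "L = s \<and> flag_type q FF = [m, m * (L - 1)]"
  then have hm: "map (\<lambda>si. m * si) ss = [m, m * (L - 1)]" using ft by simp
  then have lr: "r = 2" by (metis length_map length_Cons list.size(3) One_nat_def Suc_1)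
  have "m * ss ! 0 = m * 1" "m * ss ! 1 = m * (L - 1)" using hm lr by (metis nth_map pos2 one_less_numeral_iff semiring_norm(76) nth_Cons_0 mult_1_right, metis nth_map one_less_numeral_iff semiring_norm(76) nth_Cons_Suc nth_Cons_0 One_nat_def)
  then have e0: "ss ! 0 = 1" and e1: "ss ! 1 = L - 1" using m_pos by simp_all
  have "ss ! 0 < ss ! 1" using smono lr by simp
  then have L3: "3 \<le> L" using e0 e1 by simp
  have l1: "ss ! 1 < L" using e1 L3 by simp
  have "Min Dset \<le> (\<Sum>i<r. if ss ! i < L then 2 * m else 0)" by (rule UB)
  also have "\<dots> = 4 * m" using lr l1 s0L by (simp add: numeral_2_eq_2 lessThan_Suc)
  finally have "Min Dset \<le> 4 * m" .
  moreover have "4 * m \<le> Min Dset" using LB(2)[OF Min_in l1] .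
  ultimately have mn: "Min Dset = 4 * m" by simp
  obtain L' where L': "L = Suc L'" using L3 by (cases L) auto
  have "s = Suc L'" using h L' by simp
  then have nL: "n = m * L' + m" using n_eq by simp
  have L'2: "2 \<le> L'" using L3 L' by simp
  have mm: "m < m * L'" using L'2 m_pos by simp
  have f1: "fopt m = m"
  proof -
    have "m + m \<le> n" using nL mm by simp
    then have "m \<le> n div 2" by presburger
    then show ?thesis by simp
  qed
  have f2: "fopt (m * L') = m"
  proof -
    have "n < 2 * (m * L')" using nL mm by simp
    then have "\<not> m * L' \<le> n div 2" by presburger
    then show ?thesis using nL by simp
  qed
  have "(\<Sum>t\<leftarrow>flag_type q FF. fopt t) = 2 * m" using h f1 f2 L' by simp
  then show "OPT" unfolding OPT_def using mn by simp
qed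

lemma is_subfield_K: "is_subfield K"
  unfolding is_subfield_def
  by (intro conjI ballI impI K0 K1 Kadd Kmul Kneg Kinv)

lemma orbit_card: "card {Fy FF y | y. y \<noteq> 0} = (Q ^ s - 1) div (Q - 1)"
proof -
  have eq: "{Fy FF y | y. y \<noteq> 0} = Fy FF ` (UNIV - {0})" by blast
  have fib: "card {x \<in> UNIV - {0}. Fy FF x = Fy FF a} = Q - 1" if a: "a \<in> UNIV - {0}" for a
  proof -
    have a0: "a \<noteq> 0" using a by simp
    have "{x \<in> UNIV - {0}. Fy FF x = Fy FF a} = (\<lambda>c. c * a) ` (K - {0})"
    proof (intro equalityI subsetI)
      fix x assume "x \<in> {x \<in> UNIV - {0}. Fy FF x = Fy FF a}"
      then have x: "x \<noteq> 0" "Fy FF x = Fy FF a" by auto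
      have "Fy FF (x * inverse a) = Fy (Fy FF x) (inverse a)" by (simp add: Fy_Fy)
      also have "\<dots> = Fy (Fy FF a) (inverse a)" using x by simp
      also have "\<dots> = FF" using a0 by (simp add: Fy_Fy Fy_1)
      finally have st: "Fy FF (x * inverse a) = FF" .
      have "x * inverse a \<in> K"
      proof (rule ccontr)
        assume nk: "x * inverse a \<notin> K"
        have "Fy FF (x * inverse a) ! 0 = FF ! 0" using st by simp
        then have "scl (V (ss ! 0)) (x * inverse a) = V (ss ! 0)" using r_pos by simp
        then show False using comp_ne[OF r_pos s0L nk] by simp
      qed
      moreover have "x * inverse a \<noteq> 0" using x a0 by simp
      moreover have "x = (x * inverse a) * a" using a0 by simp
      ultimately show "x \<in> (\<lambda>c. c * a) ` (K - {0})" by blast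
    next
      fix x assume "x \<in> (\<lambda>c. c * a) ` (K - {0})"
      then obtain c where c: "c \<in> K" "c \<noteq> 0" "x = c * a" by blast
      have "Fy FF x = Fy (Fy FF c) a" using c by (simp add: Fy_Fy)
      also have "\<dots> = Fy FF a" using Fy_K[OF c(1,2)] by simp
      finally show "x \<in> {x \<in> UNIV - {0}. Fy FF x = Fy FF a}" using c a0 by simp
    qed
    moreover have "card ((\<lambda>c. c * a) ` (K - {0})) = card (K - {0})"
      by (rule card_image) (use a0 in \<open>auto simp: inj_on_def\<close>)
    moreover have "card (K - {0}) = Q - 1" using cardK K0 by (simp add: card_Diff_singleton)
    ultimately show ?thesis by simp
  qed
  have "card (UNIV - {0::'a}) = card (Fy FF ` (UNIV - {0})) * (Q - 1)"
    by (rule card_fibres) (use fib in auto)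
  moreover have "card (UNIV - {0::'a}) = Q ^ s - 1" using cardU by (simp add: card_Diff_singleton)
  ultimately have e: "Q ^ s - 1 = card {Fy FF y | y. y \<noteq> 0} * (Q - 1)" using eq by simp
  have "Q - 1 \<noteq> 0" using Q2 by simp
  then show ?thesis unfolding e by simp
qed

lemma part2b: assumes "OPT" shows "generalized_Galois_flag FF"
proof -
  note oo = opt_fwd[OF assms]
  have ssl: "ss = [1, L - 1]" using list2[OF oo(1)] oo by simp
  have L3: "3 \<le> L" using smono[of 0 1] oo by simp
  have "2 \<le> L - 1" using L3 by simp
  then have b1: "b \<in> V (L - 1)" using pow_in[of 1] V_mono[of 2 "L - 1"] by (auto simp: numeral_2_eq_2)
  have b2: "b ^ (L - 2) \<in> V (L - 1)" using pow_in[of "L - 2"] L3 by (simp add: Suc_diff_Suc numeral_2_eq_2)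
  have "b * b ^ (L - 2) = b ^ (L - 1)" using L3 by (simp add: power_Suc[symmetric] Suc_diff_Suc numeral_2_eq_2)
  moreover have "b ^ (L - 1) \<notin> V (L - 1)" using not_in[of "L - 1"] L3 by simp
  ultimately have "\<not> is_subfield (V (L - 1))" using b1 b2 unfolding is_subfield_def by metis
  moreover have "FF = [K, V (L - 1)]" using V1 by (subst ssl) simp
  ultimately show ?thesis unfolding generalized_Galois_flag_def using is_subfield_K by simp
qed

end

lemma inc_mono:
  assumes inc: "\<forall>i. Suc i < length xs \<longrightarrow> (xs::nat list) ! i < xs ! Suc i"
  shows "i < j \<Longrightarrow> j < length xs \<Longrightarrow> xs ! i < xs ! j"
proof (induction j)
  case 0 then show ?case by simp
next
  case (Suc j)
  show ?case
  proof (cases "i = j")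
    case True then show ?thesis using inc Suc by simp
  next
    case False
    then have "xs ! i < xs ! j" using Suc by simp
    also have "\<dots> < xs ! Suc j" using inc Suc by simp
    finally show ?thesis .
  qed
qed

theorem mainTheorem8:
  fixes \<alpha> :: "'a::{finite,field}" and q n m l :: nat and ss :: "nat list"
  defines "s \<equiv> n div m"
      and "L \<equiv> minpoly_degree (subfield_of_order q m :: 'a set) (\<alpha> ^ l)"
      and "r \<equiv> length ss"
      and "F \<equiv> map (\<lambda>si. power_span (subfield_of_order q m) (\<alpha> ^ l) si) ss"
  assumes q: "prime_power q" and card: "card (UNIV :: 'a set) = q ^ n"
      and mn: "m dvd n"
      and prim: "primitive_element \<alpha>"
      and l: "1 \<le> l" "l < (q ^ n - 1) div (q ^ m - 1)"
      and r: "r \<ge> 2"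
      and s_pos: "1 \<le> ss ! 0"
      and s_inc: "\<forall>i. Suc i < r \<longrightarrow> ss ! i < ss ! Suc i"
      and s_L: "ss ! (r - 1) \<le> L"
      and s_s: "ss ! (r - 1) < s"
  shows "(code_min_dist q (orbit_flag \<alpha> F) = 2 * m \<longleftrightarrow>
           (\<exists>s1. 1 \<le> s1 \<and> s1 < L \<and> L < s \<and> flag_type q F = [m * s1, m * L]))
       \<and> ((code_min_dist q (orbit_flag \<alpha> F) = 2 * m \<and> ss ! 0 = 1) \<longrightarrow>
           F = [subfield_of_order q m, subfield_of_order q (m * L)])
       \<and> (optimum_distance_flag_code q n (flag_type q F) (orbit_flag \<alpha> F) \<longleftrightarrow>
           (L = s \<and> flag_type q F = [m, m * (L - 1)]))
       \<and> (optimum_distance_flag_code q n (flag_type q F) (orbit_flag \<alpha> F) \<longrightarrow>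
           generalized_Galois_flag F \<and> card (orbit_flag \<alpha> F) = (q ^ n - 1) div (q ^ m - 1))"
proof -
  have inc': "\<forall>i. Suc i < length ss \<longrightarrow> ss ! i < ss ! Suc i" using s_inc by (simp add: r_def)
  have r': "2 \<le> length ss" using r by (simp add: r_def)
  have mpos: "m > 0" using m_pos[OF q card mn] .
  have q2': "q \<ge> 2" using q2[OF q card mn] .
  have neq: "n = m * s" using mn by (simp add: s_def)
  have s01: "ss ! 0 < ss ! 1" using inc' r' by simp
  have s1last: "ss ! 1 \<le> ss ! (length ss - 1)"
  proof (cases "length ss = 2")
    case True then show ?thesis by simp
  next
    case False
    have "1 < length ss - 1" "length ss - 1 < length ss" using False r' by auto
    then show ?thesis using inc_mono[OF inc', of 1 "length ss - 1"] by simp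
  qed
  have L2': "2 \<le> L" using s01 s1last s_L s_pos by (simp add: r_def)
  have s3: "3 \<le> s" using s01 s1last s_s s_pos by (simp add: r_def)
  have "s \<le> m * s" using mpos by simp
  then have n3: "3 \<le> n" using neq s3 by linarith
  have "(2::nat) ^ 3 \<le> 2 ^ n" using n3 by (rule power_increasing) simp
  moreover have "(2::nat) ^ n \<le> q ^ n" using q2' by (rule power_mono) simp
  ultimately have "2 ^ 3 \<le> q ^ n" by (rule le_trans)
  then have big: "card (UNIV :: 'a set) > 2" using card by simp
  have a0: "\<alpha> \<noteq> 0" using alpha_nz[OF q card mn prim big] .
  have cK: "card (subfield_of_order q m :: 'a set) = q ^ m"
    using card_K_le[OF q card mn] card_K_ge[OF q card mn prim big] by simp
  have cardU: "card (UNIV :: 'a set) = (q ^ m) ^ s" using card neq by (simp add: power_mult)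
  have Lex: "\<exists>p. p \<noteq> 0 \<and> (\<forall>i. coeff p i \<in> (subfield_of_order q m :: 'a set)) \<and> poly p (\<alpha> ^ l) = 0"
  proof -
    define N where "N = q ^ n"
    have N2: "N \<ge> 2" using big card N_def by simp
    define P :: "'a poly" where "P = monom 1 N - monom 1 1"
    have cP: "coeff P N = 1" using N2 by (simp add: P_def coeff_monom)
    then have P0: "P \<noteq> 0" by auto
    have "\<forall>i. coeff P i \<in> (subfield_of_order q m :: 'a set)"
    proof
      fix i
      have a: "coeff (monom (1::'a) N) i \<in> (subfield_of_order q m :: 'a set)"
        using K0[OF q card mn] K1[OF q card mn] by (simp add: coeff_monom)
      have b: "coeff (monom (1::'a) 1) i \<in> (subfield_of_order q m :: 'a set)"
        using K0[OF q card mn] K1[OF q card mn] by (simp add: coeff_monom)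
      have "coeff P i = coeff (monom (1::'a) N) i + - coeff (monom (1::'a) 1) i" by (simp add: P_def)
      then show "coeff P i \<in> subfield_of_order q m"
        using Kadd[OF q card mn a Kneg[OF q card mn b]] by simp
    qed
    moreover have "poly P (\<alpha> ^ l) = 0"
      using pow_card_same[of "\<alpha> ^ l"] card by (simp add: P_def poly_monom N_def)
    ultimately show ?thesis using P0 by blast
  qed
  interpret I: flagctx "subfield_of_order q m :: 'a set" "q ^ m" q m "\<alpha> ^ l" L ss s n
  proof (unfold_locales)
    show "0 \<in> (subfield_of_order q m :: 'a set)" by (rule K0[OF q card mn])
    show "1 \<in> (subfield_of_order q m :: 'a set)" by (rule K1[OF q card mn])
    show "\<And>x y. x \<in> (subfield_of_order q m :: 'a set) \<Longrightarrow> y \<in> subfield_of_order q m \<Longrightarrow> x + y \<in> subfield_of_order q m"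
      by (rule Kadd[OF q card mn])
    show "\<And>x y. x \<in> (subfield_of_order q m :: 'a set) \<Longrightarrow> y \<in> subfield_of_order q m \<Longrightarrow> x * y \<in> subfield_of_order q m"
      by (rule Kmul[OF q card mn])
    show "\<And>x. x \<in> (subfield_of_order q m :: 'a set) \<Longrightarrow> - x \<in> subfield_of_order q m"
      by (rule Kneg[OF q card mn])
    show "\<And>x. x \<in> (subfield_of_order q m :: 'a set) \<Longrightarrow> inverse x \<in> subfield_of_order q m"
      by (rule Kinv[OF q card mn])
    show "card (subfield_of_order q m :: 'a set) = q ^ m" by (rule cK)
    show "2 \<le> q ^ m" by (rule Q2[OF q card mn])
    show "q ^ m = q ^ m" by simp
    show "2 \<le> q" by (rule q2')
    show "L = minpoly_degree (subfield_of_order q m) (\<alpha> ^ l)" by (simp add: L_def)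
    show "\<exists>p. p \<noteq> 0 \<and> (\<forall>i. coeff p i \<in> (subfield_of_order q m :: 'a set)) \<and> poly p (\<alpha> ^ l) = 0" by (rule Lex)
    show "2 \<le> L" by (rule L2')
    show "2 \<le> length ss" by (rule r')
    show "1 \<le> ss ! 0" by (rule s_pos)
    show "\<forall>i. Suc i < length ss \<longrightarrow> ss ! i < ss ! Suc i" by (rule inc')
    show "ss ! (length ss - 1) \<le> L" using s_L by (simp add: r_def)
    show "ss ! (length ss - 1) < s" using s_s by (simp add: r_def)
    show "card (UNIV :: 'a set) = (q ^ m) ^ s" by (rule cardU)
    show "n = m * s" by (rule neq)
  qed
  have FF: "F = I.FF" by (simp add: F_def)
  have cmd: "code_min_dist q (orbit_flag \<alpha> F) = Min I.Dset"
    unfolding code_min_dist_def dists_eq[OF prim a0] FF ..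
  have opt: "optimum_distance_flag_code q n (flag_type q F) (orbit_flag \<alpha> F) \<longleftrightarrow> I.OPT"
    unfolding optimum_distance_flag_code_def I.OPT_def FF cmd[unfolded FF] ..
  have p1: "code_min_dist q (orbit_flag \<alpha> F) = 2 * m \<longleftrightarrow>
           (\<exists>s1. 1 \<le> s1 \<and> s1 < L \<and> L < s \<and> flag_type q F = [m * s1, m * L])"
    unfolding FF cmd[unfolded FF] by (rule I.part1)
  have p1b: "(code_min_dist q (orbit_flag \<alpha> F) = 2 * m \<and> ss ! 0 = 1) \<longrightarrow>
           F = [subfield_of_order q m, subfield_of_order q (m * L)]"
  proof
    assume h: "code_min_dist q (orbit_flag \<alpha> F) = 2 * m \<and> ss ! 0 = 1"
    have "F = [subfield_of_order q m, {x. x ^ ((q ^ m) ^ L) = x}]"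
      unfolding FF by (rule I.part1b) (use h cmd[unfolded FF] in \<open>auto simp: FF\<close>)
    then show "F = [subfield_of_order q m, subfield_of_order q (m * L)]"
      by (simp add: subfield_of_order_def power_mult)
  qed
  have p2: "optimum_distance_flag_code q n (flag_type q F) (orbit_flag \<alpha> F) \<longleftrightarrow>
           (L = s \<and> flag_type q F = [m, m * (L - 1)])"
    unfolding FF opt[unfolded FF] by (rule I.part2)
  have p2b: "optimum_distance_flag_code q n (flag_type q F) (orbit_flag \<alpha> F) \<longrightarrow>
           generalized_Galois_flag F \<and> card (orbit_flag \<alpha> F) = (q ^ n - 1) div (q ^ m - 1)"
  proof
    assume "optimum_distance_flag_code q n (flag_type q F) (orbit_flag \<alpha> F)"
    then have o: "I.OPT" using opt by simp
    have "generalized_Galois_flag F" unfolding FF by (rule I.part2b[OF o])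
    moreover have "card (orbit_flag \<alpha> F) = (q ^ n - 1) div (q ^ m - 1)"
      unfolding orbit_eq[OF prim a0] FF I.orbit_card using cardU card by simp
    ultimately show "generalized_Galois_flag F \<and> card (orbit_flag \<alpha> F) = (q ^ n - 1) div (q ^ m - 1)" ..
  qed
  show ?thesis using p1 p1b p2 p2b by blast
qed


end
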